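(* Let $c\in\mathbb{C}\setminus\{0\}$ and let $\mathbf{U}_0(\lambda;x,t)$, $\mu^{[22]}$, $\nu^{[22]}$ be as defined below. Let $\psi_1:\mathbb{R}\to\mathbb{C}$ be such that the integrals defining $$C_\mu(\lambda)=\frac1\pi\Im\Big\{\int_{\mathbb{R}}\psi_1(y)\nu^{[22]}(\lambda;y,0)^*dy\Big\},\qquad C_\nu(\lambda)=-\frac1\pi\Im\Big\{\int_{\mathbb{R}}\psi_1(y)\mu^{[22]}(\lambda;y,0)^*dy\Big\}$$ exist for a.e. $\lambda\in\mathbb{R}$ and $C_\mu,C_\nu\in L^1(\mathbb{R})$. Then $$\psi_1^{\mathbb{R}}(x,t):=\int_{\mathbb{R}}\big(C_\mu(\lambda)\mu^{[22]}(\lambda;x,t)+C_\nu(\lambda)\nu^{[22]}(\lambda;x,t)\big)d\lambda$$ is uniformly bounded for $(x,t)\in\mathbb{R}^2$.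
   Context: $\sigma_2=\begin{bmatrix}0&-\mathrm{i}\\\mathrm{i}&0\end{bmatrix}$, $\sigma_3=\mathrm{diag}(1,-1)$. $\rho(\lambda)$: branch of $\sqrt{\lambda^2+1}$ analytic off $[-\mathrm{i},\mathrm{i}]$ with $\rho\sim\lambda$ (real for real $\lambda\neq0$); $n(\lambda)$ analytic off $[-\mathrm{i},\mathrm{i}]$ with $n^2=(\lambda+\rho)/(2\rho)$, $n\to1$; $\mathbf{E}(\lambda)=n\begin{bmatrix}1&\mathrm{i}(\lambda-\rho)\\\mathrm{i}(\lambda-\rho)&1\end{bmatrix}$. Peregrine data: $\mathbf{s}=(c,-c)^\top$, $N=2|c|^2$, $w(x,t)=-2c^2(x+\mathrm{i}t)$, $\mathbf{Y}(x,t)=\big[4(1-w^* )\mathbf{s}\mathbf{s}^\top\sigma_2+2\mathrm{i}N\sigma_2\mathbf{s}^*\mathbf{s}^\top\sigma_2\big]/(4|1-w|^2+N^2)$, $\mathbf{G}(\lambda;x,t)=\mathbb{I}+\mathbf{Y}/(\lambda-\mathrm{i})+\sigma_2\mathbf{Y}^*\sigma_2/(\lambda+\mathrm{i})$. Then $\psi_0=1+2\mathrm{i}(Y_{12}-Y_{21}^* )$ is the Peregrine breather $1-4\frac{1+2\mathrm{i}(t-t_0)}{1+4(x-x_0)^2+4(t-t_0)^2}$ with $x_0=-\Re c^2/(2|c|^4)$, $t_0=\Im c^2/(2|c|^4)$, and $\mathbf{U}_0(\lambda;x,t):=\mathbf{G}(\lambda;x,t)\mathbf{E}(\lambda)e^{-\mathrm{i}\rho(\lambda)(x+\lambda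 t)\sigma_3}$, $\lambda\in\mathbb{R}\setminus\{0\}$, is a simultaneous fundamental solution of its Lax pair. Let $\mathbf{u}^{[2]}=(u^{[2]}_1,u^{[2]}_2)^\top$ be the second column of $\mathbf{U}_0$, and $\mu^{[22]}(\lambda;x,t)=(u^{[2]}_1)^2-((u^{[2]}_2)^* )^2$, $\nu^{[22]}(\lambda;x,t)=\mathrm{i}(u^{[2]}_1)^2+\mathrm{i}((u^{[2]}_2)^* )^2$; these solve the linearized NLS equation $\mathrm{i}\psi_{1t}+\frac12\psi_{1xx}+(2|\psi_0|^2-1)\psi_1+\psi_0^2\psi_1^*=0$ about $\psi_0$. *)

theory Defs
  imports "HOL-Analysis.Analysis"
begin

text \<open>2x2 complex matrices as complex^2^2; rows/columns indexed by 1 and 2.\<close>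

definition mat2 :: "complex \<Rightarrow> complex \<Rightarrow> complex \<Rightarrow> complex \<Rightarrow> complex^2^2" where
  "mat2 a b c d = (\<chi> i j. if i = 1 then (if j = 1 then a else b) else (if j = 1 then c else d))"

definition vec2 :: "complex \<Rightarrow> complex \<Rightarrow> complex^2" where
  "vec2 a b = (\<chi> i. if i = 1 then a else b)"

definition smat :: "complex \<Rightarrow> complex^2^2 \<Rightarrow> complex^2^2" where
  "smat k A = (\<chi> i j. k * A$i$j)"

definition mconj :: "complex^2^2 \<Rightarrow> complex^2^2" where
  "mconj A = (\<chi> i j. cnj (A$i$j))"

definition vconj :: "complex^2 \<Rightarrow> complex^2" where
  "vconj v = (\<chi> i. cnj (v$i))"

definition outer :: "complex^2 \<Rightarrow> complex^2 \<Rightarrow> complex^2^2" where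
  "outer u v = (\<chi> i j. u$i * v$j)"

definition sigma2 :: "complex^2^2" where
  "sigma2 = mat2 0 (-\<i>) \<i> 0"

text \<open>rho on the real line: branch of sqrt(l^2+1) with rho ~ l, real for real l /= 0\<close>
definition rho :: "real \<Rightarrow> real" where
  "rho l = sgn l * sqrt (l\<^sup>2 + 1)"

text \<open>n on the real line: n^2 = (l+rho)/(2 rho) > 0, n -> 1; hence the positive root\<close>
definition nfun :: "real \<Rightarrow> real" where
  "nfun l = sqrt ((l + rho l) / (2 * rho l))"

definition Emat :: "real \<Rightarrow> complex^2^2" where
  "Emat l = smat (of_real (nfun l))
     (mat2 1 (\<i> * of_real (l - rho l)) (\<i> * of_real (l - rho l)) 1)"

definition sv :: "complex \<Rightarrow> complex^2" where
  "sv c = vec2 c (-c)"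

definition Nc :: "complex \<Rightarrow> real" where
  "Nc c = 2 * (cmod c)\<^sup>2"

definition wfun :: "complex \<Rightarrow> real \<Rightarrow> real \<Rightarrow> complex" where
  "wfun c x t = -2 * c\<^sup>2 * (of_real x + \<i> * of_real t)"

definition Ymat :: "complex \<Rightarrow> real \<Rightarrow> real \<Rightarrow> complex^2^2" where
  "Ymat c x t = smat (1 / of_real (4 * (cmod (1 - wfun c x t))\<^sup>2 + (Nc c)\<^sup>2))
     (smat (4 * (1 - cnj (wfun c x t))) (outer (sv c) (sv c) ** sigma2)
      + smat (2 * \<i> * of_real (Nc c)) (sigma2 ** outer (vconj (sv c)) (sv c) ** sigma2))"

definition Gmat :: "complex \<Rightarrow> real \<Rightarrow> real \<Rightarrow> real \<Rightarrow> complex^2^2" where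
  "Gmat c l x t = mat 1 + smat (1 / (of_real l - \<i>)) (Ymat c x t)
     + smat (1 / (of_real l + \<i>)) (sigma2 ** mconj (Ymat c x t) ** sigma2)"

definition U0 :: "complex \<Rightarrow> real \<Rightarrow> real \<Rightarrow> real \<Rightarrow> complex^2^2" where
  "U0 c l x t = Gmat c l x t ** Emat l **
     mat2 (exp (- \<i> * of_real (rho l * (x + l * t)))) 0 0 (exp (\<i> * of_real (rho l * (x + l * t))))"

definition u2 :: "complex \<Rightarrow> real \<Rightarrow> real \<Rightarrow> real \<Rightarrow> complex^2" where
  "u2 c l x t = (\<chi> i. U0 c l x t $ i $ 2)"

definition mu22 :: "complex \<Rightarrow> real \<Rightarrow> real \<Rightarrow> real \<Rightarrow> complex" where
  "mu22 c l x t = (u2 c l x t $ 1)\<^sup>2 - (cnj (u2 c l x t $ 2))\<^sup>2"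

definition nu22 :: "complex \<Rightarrow> real \<Rightarrow> real \<Rightarrow> real \<Rightarrow> complex" where
  "nu22 c l x t = \<i> * (u2 c l x t $ 1)\<^sup>2 + \<i> * (cnj (u2 c l x t $ 2))\<^sup>2"

definition Cmu :: "complex \<Rightarrow> (real \<Rightarrow> complex) \<Rightarrow> real \<Rightarrow> real" where
  "Cmu c psi1 l = (1 / pi) * Im (LINT y|lborel. psi1 y * cnj (nu22 c l y 0))"

definition Cnu :: "complex \<Rightarrow> (real \<Rightarrow> complex) \<Rightarrow> real \<Rightarrow> real" where
  "Cnu c psi1 l = - (1 / pi) * Im (LINT y|lborel. psi1 y * cnj (mu22 c l y 0))"

definition psi1R_integrand :: "complex \<Rightarrow> (real \<Rightarrow> complex) \<Rightarrow> real \<Rightarrow> real \<Rightarrow> real \<Rightarrow> complex" where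
  "psi1R_integrand c psi1 x t l =
     of_real (Cmu c psi1 l) * mu22 c l x t + of_real (Cnu c psi1 l) * nu22 c l x t"

definition psi1R :: "complex \<Rightarrow> (real \<Rightarrow> complex) \<Rightarrow> real \<Rightarrow> real \<Rightarrow> complex" where
  "psi1R c psi1 x t = (LINT l|lborel. psi1R_integrand c psi1 x t l)"

end

theory Submission
  imports Defs
begin

definition mnorm :: "complex^2^2 \<Rightarrow> real" where
  "mnorm A = (\<Sum>i\<in>UNIV. \<Sum>j\<in>UNIV. cmod (A$i$j))"

lemma two_ne: "(1::2) \<noteq> 2" by simp

lemma mnorm_expand: "mnorm A = cmod (A$1$1) + cmod (A$1$2) + cmod (A$2$1) + cmod (A$2$2)"
  unfolding mnorm_def by (simp add: UNIV_2)

lemma mnorm_nonneg: "0 \<le> mnorm A" unfolding mnorm_def by (intro sum_nonneg) auto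

lemma entry_le: "cmod (A$i$j) \<le> mnorm A"
  unfolding mnorm_expand using exhaust_2[of i] exhaust_2[of j] by auto

lemma mnorm_add: "mnorm (A + B) \<le> mnorm A + mnorm B"
  unfolding mnorm_expand using norm_triangle_ineq[of "A$1$1" "B$1$1"] norm_triangle_ineq[of "A$1$2" "B$1$2"]
   norm_triangle_ineq[of "A$2$1" "B$2$1"] norm_triangle_ineq[of "A$2$2" "B$2$2"] by simp

lemma mnorm_smat: "mnorm (smat k A) = cmod k * mnorm A"
  unfolding mnorm_expand smat_def by (simp add: norm_mult algebra_simps)

lemma mnorm_mconj: "mnorm (mconj A) = mnorm A"
  unfolding mnorm_expand mconj_def by simp

lemma mnorm_mat2: "mnorm (mat2 a b c d) = cmod a + cmod b + cmod c + cmod d"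
  unfolding mnorm_expand mat2_def by simp

lemma mnorm_one: "mnorm (mat 1) = 2"
  unfolding mnorm_expand by (simp add: mat_def)

lemma aux8:
  fixes a11 a12 a21 a22 b11 b12 b21 b22 :: real
  assumes "0\<le>a11" "0\<le>a12" "0\<le>a21" "0\<le>a22" "0\<le>b11" "0\<le>b12" "0\<le>b21" "0\<le>b22"
  shows "(a11*b11 + a12*b21) + (a11*b12 + a12*b22) + (a21*b11 + a22*b21) + (a21*b12 + a22*b22)
     \<le> (a11+a12+a21+a22)*(b11+b12+b21+b22)"
proof -
  have "(a11+a12+a21+a22)*(b11+b12+b21+b22) = (a11*b11 + a12*b21) + (a11*b12 + a12*b22) + (a21*b11 + a22*b21) + (a21*b12 + a22*b22)
    + (a11*b21 + a11*b22 + a12*b11 + a12*b12 + a21*b21+a21*b22+a22*b11+a22*b12)" by (simp add: algebra_simps)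
  moreover have "0 \<le> a11*b21 + a11*b22 + a12*b11 + a12*b12 + a21*b21+a21*b22+a22*b11+a22*b12"
    using assms by simp
  ultimately show ?thesis by linarith
qed

lemma mnorm_mult: "mnorm (A ** B) \<le> mnorm A * mnorm B"
proof -
  have e: "(A ** B)$i$j = A$i$1 * B$1$j + A$i$2 * B$2$j" for i j
    by (simp add: matrix_matrix_mult_def UNIV_2)
  have t: "cmod ((A ** B)$i$j) \<le> cmod (A$i$1) * cmod (B$1$j) + cmod (A$i$2) * cmod (B$2$j)" for i j
    unfolding e using norm_triangle_ineq[of "A$i$1 * B$1$j" "A$i$2*B$2$j"] by (simp add: norm_mult)
  have "mnorm (A ** B) \<le> (cmod (A$1$1) * cmod (B$1$1) + cmod (A$1$2) * cmod (B$2$1))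
     + (cmod (A$1$1) * cmod (B$1$2) + cmod (A$1$2) * cmod (B$2$2))
     + (cmod (A$2$1) * cmod (B$1$1) + cmod (A$2$2) * cmod (B$2$1))
     + (cmod (A$2$1) * cmod (B$1$2) + cmod (A$2$2) * cmod (B$2$2))"
    unfolding mnorm_expand using t[of 1 1] t[of 1 2] t[of 2 1] t[of 2 2] by linarith
  also have "\<dots> \<le> mnorm A * mnorm B" unfolding mnorm_expand by (rule aux8) auto
  finally show ?thesis .
qed


lemma rho_props: "\<bar>l - rho l\<bar> \<le> 1" "nfun l \<le> 1" "0 \<le> nfun l"
proof -
  have s1: "\<bar>l\<bar> \<le> sqrt (l\<^sup>2+1)" by (simp add: real_le_rsqrt)
  have s2: "sqrt (l\<^sup>2+1) \<le> \<bar>l\<bar> + 1"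
    by (rule real_le_lsqrt[THEN order_trans[OF _ order_refl]]) (auto simp: power2_eq_square algebra_simps)
  have sp: "0 < sqrt (l\<^sup>2+1)" by (rule real_sqrt_gt_zero) (smt (verit) zero_le_power2)
  show "\<bar>l - rho l\<bar> \<le> 1"
    using s1 s2 by (cases "l > 0"; cases "l < 0") (auto simp: rho_def)
  have "(l + rho l) / (2 * rho l) \<le> 1"
  proof (cases "l > 0")
    case True then show ?thesis using s1 sp by (auto simp: rho_def divide_simps)
  next
    case False
    show ?thesis
    proof (cases "l < 0")
      case True then show ?thesis using s1 sp by (auto simp: rho_def divide_simps)
    next
      case False with \<open>\<not> l > 0\<close> show ?thesis by (auto simp: rho_def)
    qed
  qed
  then show "nfun l \<le> 1" unfolding nfun_def by simp
  have "0 \<le> (l + rho l) / (2 * rho l)"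
  proof (cases "l > 0")
    case True
    then have "0 < rho l" "0 \<le> l + rho l" using sp by (auto simp: rho_def)
    then show ?thesis by simp
  next
    case False
    show ?thesis
    proof (cases "l < 0")
      case True
      then have "rho l < 0" "l + rho l \<le> 0" using sp s1 by (auto simp: rho_def)
      then show ?thesis by (simp add: divide_nonpos_neg)
    next
      case False with \<open>\<not> l > 0\<close> show ?thesis by (auto simp: rho_def)
    qed
  qed
  then show "0 \<le> nfun l" unfolding nfun_def by simp
qed

lemma Nc_pos: "c \<noteq> 0 \<Longrightarrow> 0 < Nc c" by (simp add: Nc_def)

definition KY :: "complex \<Rightarrow> real" where
  "KY c = (mnorm (outer (sv c) (sv c) ** sigma2) + 2 * mnorm (sigma2 ** outer (vconj (sv c)) (sv c) ** sigma2)) / Nc c"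

lemma Y_bound:
  assumes "c \<noteq> 0" shows "mnorm (Ymat c x t) \<le> KY c"
proof -
  define a where "a = cmod (1 - wfun c x t)"
  define N where "N = Nc c"
  define P where "P = outer (sv c) (sv c) ** sigma2"
  define Q where "Q = sigma2 ** outer (vconj (sv c)) (sv c) ** sigma2"
  have N: "0 < N" using assms by (simp add: N_def Nc_pos)
  have a: "0 \<le> a" by (simp add: a_def)
  define D where "D = 4 * a\<^sup>2 + N\<^sup>2"
  have D: "0 < D" using N by (simp add: D_def add_nonneg_pos)
  have ca: "cmod (1 - cnj (wfun c x t)) = a"
    by (metis a_def complex_cnj_one complex_cnj_diff complex_mod_cnj)
  have g: "mnorm (smat k1 P + smat k2 Q) \<le> cmod k1 * mnorm P + cmod k2 * mnorm Q" for k1 k2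
    using mnorm_add[of "smat k1 P" "smat k2 Q"] by (simp add: mnorm_smat)
  have k1: "cmod (4 * (1 - cnj (wfun c x t))) = 4 * a" by (simp only: norm_mult ca) simp
  have k2: "cmod (2 * \<i> * complex_of_real (Nc c)) = 2 * N" using N by (simp add: norm_mult N_def)
  have k0: "cmod (1 / complex_of_real (4 * (cmod (1 - wfun c x t))\<^sup>2 + (Nc c)\<^sup>2)) = 1/D"
    using D unfolding D_def a_def N_def by (simp only: norm_divide norm_one norm_of_real)
  have "mnorm (Ymat c x t) \<le> (1/D) * (4 * a * mnorm P + 2 * N * mnorm Q)"
    unfolding Ymat_def mnorm_smat k0 P_def[symmetric] Q_def[symmetric]
    using g[of "4 * (1 - cnj (wfun c x t))" "2 * \<i> * complex_of_real (Nc c)"] D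
    unfolding k1 k2 by (simp add: divide_right_mono)
  also have "\<dots> = (4*a/D) * mnorm P + 2 * (N / D) * mnorm Q" by (simp add: algebra_simps)
  also have "\<dots> \<le> (1/N) * mnorm P + 2 * (1/N) * mnorm Q"
  proof (intro add_mono mult_right_mono mult_left_mono mnorm_nonneg)
    have "0 \<le> (2*a-N)^2" by simp
    then have i1: "4*a*N \<le> D" unfolding D_def by (simp add: power2_eq_square algebra_simps)
    show "4*a/D \<le> 1/N" using D N i1 by (simp add: field_simps)
    have i2: "N*N \<le> D" unfolding D_def by (simp add: power2_eq_square)
    show "N/D \<le> 1/N" using D N i2 by (simp add: field_simps)
  qed auto
  also have "\<dots> = KY c" by (simp add: KY_def P_def Q_def N_def add_divide_distrib)
  finally show ?thesis .
qed


lemma mnorm_sigma2: "mnorm sigma2 = 2" by (simp add: sigma2_def mnorm_mat2)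

lemma inv_bound: "cmod (1 / (complex_of_real l - \<i>)) \<le> 1" "cmod (1 / (complex_of_real l + \<i>)) \<le> 1"
proof -
  have "1 \<le> cmod (complex_of_real l - \<i>)" using abs_Im_le_cmod[of "complex_of_real l - \<i>"] by simp
  then show "cmod (1 / (complex_of_real l - \<i>)) \<le> 1" by (simp add: norm_divide divide_le_eq_1)
  have "1 \<le> cmod (complex_of_real l + \<i>)" using abs_Im_le_cmod[of "complex_of_real l + \<i>"] by simp
  then show "cmod (1 / (complex_of_real l + \<i>)) \<le> 1" by (simp add: norm_divide divide_le_eq_1)
qed

lemma G_bound:
  assumes "c \<noteq> 0" shows "mnorm (Gmat c l x t) \<le> 2 + 5 * KY c"
proof -
  have Y: "mnorm (Ymat c x t) \<le> KY c" using Y_bound[OF assms] .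
  have s: "mnorm (sigma2 ** mconj (Ymat c x t) ** sigma2) \<le> 4 * KY c"
  proof -
    have "mnorm (sigma2 ** mconj (Ymat c x t) ** sigma2) \<le> mnorm (sigma2 ** mconj (Ymat c x t)) * mnorm sigma2"
      by (rule mnorm_mult)
    also have "\<dots> \<le> (mnorm sigma2 * mnorm (mconj (Ymat c x t))) * mnorm sigma2"
      by (intro mult_right_mono mnorm_mult mnorm_nonneg)
    also have "\<dots> \<le> 4 * KY c" using Y by (simp add: mnorm_sigma2 mnorm_mconj)
    finally show ?thesis .
  qed
  have "mnorm (Gmat c l x t) \<le> mnorm (mat 1) + cmod (1 / (complex_of_real l - \<i>)) * mnorm (Ymat c x t)
      + cmod (1 / (complex_of_real l + \<i>)) * mnorm (sigma2 ** mconj (Ymat c x t) ** sigma2)"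
    using mnorm_add[of "mat 1" "smat (1 / (complex_of_real l - \<i>)) (Ymat c x t)"]
      mnorm_add[of "mat 1 + smat (1 / (complex_of_real l - \<i>)) (Ymat c x t)" "smat (1 / (complex_of_real l + \<i>)) (sigma2 ** mconj (Ymat c x t) ** sigma2)"]
    unfolding Gmat_def mnorm_smat by linarith
  also have "\<dots> \<le> 2 + 1 * KY c + 1 * (4 * KY c)"
    by (intro add_mono mult_mono inv_bound Y s) (auto simp: mnorm_one mnorm_nonneg)
  finally show ?thesis by simp
qed

lemma E_bound: "mnorm (Emat l) \<le> 4"
proof -
  have "mnorm (Emat l) = nfun l * (2 + 2 * \<bar>l - rho l\<bar>)"
    unfolding Emat_def mnorm_smat mnorm_mat2 using rho_props(3)[of l]
    by (simp add: norm_mult flip: of_real_diff)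
  also have "\<dots> \<le> 1 * 4" using rho_props[of l] by (intro mult_mono) auto
  finally show ?thesis by simp
qed

lemma D_bound: "mnorm (mat2 (exp (- \<i> * of_real r)) 0 0 (exp (\<i> * of_real r))) = 2"
proof -
  have "- \<i> * complex_of_real r = \<i> * complex_of_real (- r)" by simp
  then show ?thesis unfolding mnorm_mat2 by (simp only: norm_exp_i_times) simp
qed

definition KU :: "complex \<Rightarrow> real" where "KU c = (2 + 5 * KY c) * 4 * 2"

lemma U0_bound: assumes "c \<noteq> 0" shows "mnorm (U0 c l x t) \<le> KU c"
proof -
  let ?G = "Gmat c l x t" and ?E = "Emat l"
    and ?D = "mat2 (exp (- \<i> * of_real (rho l * (x + l * t)))) 0 0 (exp (\<i> * of_real (rho l * (x + l * t))))"
  have "mnorm (U0 c l x t) \<le> mnorm (?G ** ?E) * mnorm ?D" unfolding U0_def by (rule mnorm_mult)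
  also have "\<dots> \<le> (mnorm ?G * mnorm ?E) * mnorm ?D" by (rule mult_right_mono[OF mnorm_mult mnorm_nonneg])
  also have "\<dots> \<le> ((2 + 5 * KY c) * 4) * 2" unfolding D_bound
  proof -
    have g0: "0 \<le> 2 + 5 * KY c" using order_trans[OF mnorm_nonneg G_bound[OF assms]] .
    have "mnorm ?G * mnorm ?E \<le> (2 + 5 * KY c) * 4" 
      by (rule mult_mono[OF G_bound[OF assms] E_bound g0 mnorm_nonneg])
    then show "mnorm ?G * mnorm ?E * 2 \<le> (2 + 5 * KY c) * 4 * 2" by simp
  qed
  finally show ?thesis by (simp add: KU_def)
qed

lemma mu_nu_bound: assumes "c \<noteq> 0"
  shows "cmod (mu22 c l x t) \<le> 2 * (KU c)\<^sup>2" "cmod (nu22 c l x t) \<le> 2 * (KU c)\<^sup>2"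
proof -
  have a: "cmod (u2 c l x t $ i) \<le> KU c" for i
    unfolding u2_def vec_lambda_beta by (rule order_trans[OF entry_le U0_bound[OF assms]])
  have b: "cmod ((u2 c l x t $ i)\<^sup>2) \<le> (KU c)\<^sup>2" for i
    unfolding norm_power by (rule power_mono[OF a]) simp
  have b2: "cmod ((cnj (u2 c l x t $ i))\<^sup>2) \<le> (KU c)\<^sup>2" for i
    using b[of i] by (simp add: norm_power)
  show "cmod (mu22 c l x t) \<le> 2 * (KU c)\<^sup>2" unfolding mu22_def
    using norm_triangle_ineq4[of "(u2 c l x t $ 1)\<^sup>2" "(cnj (u2 c l x t $ 2))\<^sup>2"] b[of 1] b2[of 2] by simp
  show "cmod (nu22 c l x t) \<le> 2 * (KU c)\<^sup>2" unfolding nu22_def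
    using norm_triangle_ineq[of "\<i> * (u2 c l x t $ 1)\<^sup>2" "\<i> * (cnj (u2 c l x t $ 2))\<^sup>2"] b[of 1] b2[of 2]
    by (simp add: norm_mult)
qed


lemma cont_mmult[continuous_intros]:
  fixes f g :: "'a::topological_space \<Rightarrow> complex^2^2"
  shows "continuous_on S f \<Longrightarrow> continuous_on S g \<Longrightarrow> continuous_on S (\<lambda>x. f x ** g x)"
  unfolding matrix_matrix_mult_def by (intro continuous_intros) auto

lemma cont_smat[continuous_intros]:
  fixes f :: "'a::topological_space \<Rightarrow> complex" and g :: "'a \<Rightarrow> complex^2^2"
  shows "continuous_on S f \<Longrightarrow> continuous_on S g \<Longrightarrow> continuous_on S (\<lambda>x. smat (f x) (g x))"
  unfolding smat_def by (intro continuous_intros) auto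

lemma cont_mat2[continuous_intros]:
  fixes a b c d :: "'a::topological_space \<Rightarrow> complex"
  assumes "continuous_on S a" "continuous_on S b" "continuous_on S c" "continuous_on S d"
  shows "continuous_on S (\<lambda>x. mat2 (a x) (b x) (c x) (d x))"
  unfolding mat2_def
proof (intro continuous_on_vec_lambda)
  fix i j :: 2
  show "continuous_on S (\<lambda>x. if i = 1 then if j = 1 then a x else b x else if j = 1 then c x else d x)"
    using assms by (cases "i = 1"; cases "j = 1") simp_all
qed

lemma cont_rho: "continuous_on (-{0}) rho"
  unfolding rho_def
  by (intro continuous_intros continuous_at_imp_continuous_on ballI isCont_sgn) auto

lemma rho_nz: "l \<noteq> 0 \<Longrightarrow> rho l \<noteq> 0"
proof -
  have "0 < sqrt (l\<^sup>2+1)" by (rule real_sqrt_gt_zero) (smt (verit) zero_le_power2)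
  then show "l \<noteq> 0 \<Longrightarrow> rho l \<noteq> 0" by (simp add: rho_def sgn_if)
qed

lemma cont_nfun: "continuous_on (-{0}) nfun"
  unfolding nfun_def
  by (intro continuous_intros cont_rho) (auto simp: rho_nz)

lemma cont_mu_nu:
  "continuous_on (-{0}) (\<lambda>l. mu22 c l x t)" "continuous_on (-{0}) (\<lambda>l. nu22 c l x t)"
proof -
  have ne1: "complex_of_real l - \<i> \<noteq> 0" for l by (simp add: complex_eq_iff)
  have ne2: "complex_of_real l + \<i> \<noteq> 0" for l by (simp add: complex_eq_iff)
  have cr: "continuous_on (-{0}) (\<lambda>l. complex_of_real (rho l))"
    by (intro continuous_intros cont_rho)
  have cn: "continuous_on (-{0}) (\<lambda>l. complex_of_real (nfun l))"
    by (intro continuous_intros cont_nfun)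
  have cU: "continuous_on (-{0}) (\<lambda>l. U0 c l x t)"
  proof -
    have i1: "continuous_on (-{0}) (\<lambda>l. 1 / (complex_of_real l - \<i>))"
      by (intro continuous_on_divide continuous_intros) (auto simp: complex_eq_iff)
    have i2: "continuous_on (-{0}) (\<lambda>l. 1 / (complex_of_real l + \<i>))"
      by (intro continuous_on_divide continuous_intros) (auto simp: complex_eq_iff)
    have cG: "continuous_on (-{0}) (\<lambda>l. Gmat c l x t)"
      unfolding Gmat_def
      by (intro continuous_on_add continuous_on_const cont_smat i1 i2)
    have cE: "continuous_on (-{0}) Emat"
      unfolding Emat_def
      by (intro cont_smat cont_mat2 continuous_on_const continuous_on_mult cn
          continuous_on_of_real continuous_on_diff continuous_on_id cont_rho)
    have ph: "continuous_on (-{0}) (\<lambda>l. complex_of_real (rho l * (x + l * t)))"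
      by (intro continuous_on_of_real continuous_on_mult continuous_on_add continuous_on_const continuous_on_id cont_rho)
    have cD: "continuous_on (-{0}) (\<lambda>l. mat2 (exp (- \<i> * of_real (rho l * (x + l * t)))) 0 0 (exp (\<i> * of_real (rho l * (x + l * t)))))"
      by (intro cont_mat2 continuous_on_exp continuous_on_mult continuous_on_const ph)
    show ?thesis unfolding U0_def by (intro cont_mmult cG cE cD)
  qed
  have cu: "continuous_on (-{0}) (\<lambda>l. u2 c l x t $ i)" for i
    unfolding u2_def vec_lambda_beta by (intro continuous_intros cU)
  show "continuous_on (-{0}) (\<lambda>l. mu22 c l x t)" "continuous_on (-{0}) (\<lambda>l. nu22 c l x t)"
    unfolding mu22_def nu22_def by (intro continuous_intros cu)+
qed

lemma meas_mu_nu: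
  "(\<lambda>l. mu22 c l x t) \<in> borel_measurable borel" "(\<lambda>l. nu22 c l x t) \<in> borel_measurable borel"
  by (rule borel_measurable_continuous_countable_exceptions[of "{0}"]; simp add: cont_mu_nu)+


theorem mainTheorem14:
  fixes c :: complex and psi1 :: "real \<Rightarrow> complex"
  assumes "c \<noteq> 0"
    and "AE l in lborel. integrable lborel (\<lambda>y. psi1 y * cnj (nu22 c l y 0))"
    and "AE l in lborel. integrable lborel (\<lambda>y. psi1 y * cnj (mu22 c l y 0))"
    and "integrable lborel (Cmu c psi1)"
    and "integrable lborel (Cnu c psi1)"
  shows "\<exists>B. \<forall>x t. integrable lborel (psi1R_integrand c psi1 x t)
                 \<and> cmod (psi1R c psi1 x t) \<le> B"
proof -
  define K where "K = 2 * (KU c)\<^sup>2"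
  define g where "g = (\<lambda>l. K * (\<bar>Cmu c psi1 l\<bar> + \<bar>Cnu c psi1 l\<bar>))"
  have K0: "0 \<le> K" by (simp add: K_def)
  have gi: "integrable lborel g" unfolding g_def
    using assms(4,5) by (intro integrable_mult_right Bochner_Integration.integrable_add integrable_abs)
  have mCmu: "Cmu c psi1 \<in> borel_measurable lborel" using assms(4) by (rule borel_measurable_integrable)
  have mCnu: "Cnu c psi1 \<in> borel_measurable lborel" using assms(5) by (rule borel_measurable_integrable)
  have bnd: "cmod (psi1R_integrand c psi1 x t l) \<le> g l" for x t l
  proof -
    have "cmod (psi1R_integrand c psi1 x t l) \<le> \<bar>Cmu c psi1 l\<bar> * cmod (mu22 c l x t) + \<bar>Cnu c psi1 l\<bar> * cmod (nu22 c l x t)"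
      unfolding psi1R_integrand_def
      using norm_triangle_ineq[of "complex_of_real (Cmu c psi1 l) * mu22 c l x t" "complex_of_real (Cnu c psi1 l) * nu22 c l x t"]
      by (simp add: norm_mult)
    also have "\<dots> \<le> \<bar>Cmu c psi1 l\<bar> * K + \<bar>Cnu c psi1 l\<bar> * K"
      unfolding K_def using mu_nu_bound[OF assms(1), of l x t]
      by (intro add_mono mult_left_mono) auto
    finally show ?thesis by (simp add: g_def algebra_simps)
  qed
  have ii: "integrable lborel (psi1R_integrand c psi1 x t)" for x t
  proof (rule Bochner_Integration.integrable_bound[OF gi])
    show "psi1R_integrand c psi1 x t \<in> borel_measurable lborel"
      unfolding psi1R_integrand_def using mCmu mCnu meas_mu_nu[of c x t]
      by (simp add: measurable_lborel2)
    show "AE l in lborel. norm (psi1R_integrand c psi1 x t l) \<le> norm (g l)"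
      by (intro AE_I2) (metis bnd abs_ge_self order_trans real_norm_def)
  qed
  show ?thesis
  proof (intro exI allI conjI)
    fix x t
    show "integrable lborel (psi1R_integrand c psi1 x t)" by (rule ii)
    show "cmod (psi1R c psi1 x t) \<le> integral\<^sup>L lborel g"
      unfolding psi1R_def by (rule Bochner_Integration.integral_norm_bound_integral[OF ii gi bnd])
  qed
qed

end
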